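(* Consider the four-dimensional pp-wave spacetime with coordinates $(u,v,x,y)$ and metric $ds^2=H(u,x,y)\,du^2+2\,du\,dv+dx^2+dy^2$, where $H$ is an arbitrary smooth function of $u,x,y$. Then: (i) the 1-form $u\,du$ (dual to $u\,\partial_v$) is a closed affine vector field, i.e. a closed rank-1 antisymmetric affine tensor field; (ii) $du\wedge dx$ and $du\wedge dy$ are Killing–Yano tensors; (iii) $u\,du\wedge dx$ and $u\,du\wedge dy$ are proper rank-2 antisymmetric affine tensor fields; (iv) $u\,du\wedge dx\wedge dy$ is a rank-3 antisymmetric affine tensor field.
   Context: $\nabla$ is the Levi-Civita connection; symmetrization $(\cdots)$ over $k$ indices has weight $1/k!$. A rank-$p$ antisymmetric affine tensor field is a $p$-form $f$ with $\nabla_\mu\nabla_{(\nu}f_{\rho_1)\rho_2\cdots\rho_p}=0$; it is closed if $df=0$, Killing–Yano if $\nabla_{(\mu}f_{\nu_1)\nu_2\cdots\nu_p}=0$, and proper if $\nabla_{(\mu}f_{\nu_1)\nu_2\cdots\nu_p}\neq0$. For $p=1$ such a field is (the dual of) an affine vector field. *)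

theory Defs
  imports "HOL-Analysis.Analysis"
begin

text \<open>Coordinates on R^4 are indexed by the numeral type 4:
  index 0 = u, 1 = v, 2 = x, 3 = y. A covariant tensor field of rank k is
  represented by its coordinate components: a function of the point and of
  a list of k indices.\<close>

type_synonym pt = "real^4"
type_synonym tfield = "pt \<Rightarrow> 4 list \<Rightarrow> real"

definition pd :: "4 \<Rightarrow> (pt \<Rightarrow> real) \<Rightarrow> pt \<Rightarrow> real" where
  "pd i F p = deriv (\<lambda>t. F (p + t *\<^sub>R axis i 1)) 0"

definition smooth4 :: "(pt \<Rightarrow> real) \<Rightarrow> bool" where
  "smooth4 F \<longleftrightarrow> (\<forall>is p. (foldr pd is F) differentiable (at p))"

text \<open>Christoffel symbols of the Levi-Civita connection of the metric g:
  christoffel g p k i j = Gamma^k_{ij}(p).\<close>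
definition christoffel :: "(pt \<Rightarrow> real^4^4) \<Rightarrow> pt \<Rightarrow> 4 \<Rightarrow> 4 \<Rightarrow> 4 \<Rightarrow> real" where
  "christoffel g p k i j =
     (\<Sum>l\<in>UNIV. (matrix_inv (g p)) $ k $ l *
        (pd i (\<lambda>q. g q $ l $ j) p + pd j (\<lambda>q. g q $ l $ i) p - pd l (\<lambda>q. g q $ i $ j) p)) / 2"

text \<open>Levi-Civita covariant derivative of a covariant tensor; the new index comes first:
  (nabla T)_{mu nu_1 ... nu_k}.\<close>
definition cov :: "(pt \<Rightarrow> real^4^4) \<Rightarrow> tfield \<Rightarrow> tfield" where
  "cov g T p idx = (case idx of [] \<Rightarrow> 0
     | \<mu> # \<nu>s \<Rightarrow> pd \<mu> (\<lambda>q. T q \<nu>s) p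
          - (\<Sum>a<length \<nu>s. \<Sum>l\<in>UNIV. christoffel g p l \<mu> (\<nu>s ! a) * T p (\<nu>s[a := l])))"

definition sym2 :: "tfield \<Rightarrow> tfield" where
  "sym2 T p idx = (case idx of a # b # rest \<Rightarrow> (T p (a # b # rest) + T p (b # a # rest)) / 2 | _ \<Rightarrow> 0)"

definition is_form :: "nat \<Rightarrow> tfield \<Rightarrow> bool" where
  "is_form k T \<longleftrightarrow> (\<forall>idx. length idx = k \<longrightarrow> smooth4 (\<lambda>p. T p idx)) \<and>
     (\<forall>p idx i. length idx = k \<and> Suc i < k \<longrightarrow>
        T p (idx[i := idx ! Suc i, Suc i := idx ! i]) = - T p idx)"

definition ext_d :: "tfield \<Rightarrow> tfield" where
  "ext_d T p idx = (\<Sum>a<length idx. (-1) ^ a * pd (idx ! a) (\<lambda>q. T q (take a idx @ drop (Suc a) idx)) p)"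

definition closed_form :: "nat \<Rightarrow> tfield \<Rightarrow> bool" where
  "closed_form k T \<longleftrightarrow> (\<forall>p idx. length idx = Suc k \<longrightarrow> ext_d T p idx = 0)"

definition affine_tensor :: "(pt \<Rightarrow> real^4^4) \<Rightarrow> nat \<Rightarrow> tfield \<Rightarrow> bool" where
  "affine_tensor g k T \<longleftrightarrow> is_form k T \<and>
     (\<forall>p idx. length idx = k + 2 \<longrightarrow> cov g (sym2 (cov g T)) p idx = 0)"

definition killing_yano :: "(pt \<Rightarrow> real^4^4) \<Rightarrow> nat \<Rightarrow> tfield \<Rightarrow> bool" where
  "killing_yano g k T \<longleftrightarrow> is_form k T \<and>
     (\<forall>p idx. length idx = k + 1 \<longrightarrow> sym2 (cov g T) p idx = 0)"

definition proper_affine :: "(pt \<Rightarrow> real^4^4) \<Rightarrow> nat \<Rightarrow> tfield \<Rightarrow> bool" where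
  "proper_affine g k T \<longleftrightarrow> affine_tensor g k T \<and>
     (\<exists>p idx. length idx = k + 1 \<and> sym2 (cov g T) p idx \<noteq> 0)"

text \<open>Components of dx^{c_1} wedge ... wedge dx^{c_k} (determinant convention).\<close>
definition cwedge :: "4 list \<Rightarrow> 4 list \<Rightarrow> real" where
  "cwedge cs idx = (if length idx = length cs then
     (\<Sum>\<sigma> | \<sigma> permutes {..<length cs}. of_int (sign \<sigma>) *
        (\<Prod>r<length cs. if idx ! r = cs ! (\<sigma> r) then 1 else 0)) else 0)"

definition pp_metric :: "(real \<Rightarrow> real \<Rightarrow> real \<Rightarrow> real) \<Rightarrow> pt \<Rightarrow> real^4^4" where
  "pp_metric H p = (\<chi> i j. if i = 0 \<and> j = 0 then H (p $ 0) (p $ 2) (p $ 3)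
     else if (i = 0 \<and> j = 1) \<or> (i = 1 \<and> j = 0) then 1
     else if i = j \<and> (i = 2 \<or> i = 3) then 1 else 0)"

end

theory Submission imports Defs begin

lemma forall4: "(\<forall>i::4. P i) \<longleftrightarrow> P 0 \<and> P 1 \<and> P 2 \<and> P 3"
proof -
  have f: "(4::4) = 0" by simp
  show ?thesis by (metis exhaust_4 f)
qed
lemma UNIV4: "(UNIV::4 set) = {0,1,2,3}" using forall4[of "\<lambda>i. i \<in> {0,1,2,3}"] by auto
lemma sum4: "(\<Sum>l\<in>(UNIV::4 set). f l) = f 0 + f 1 + f 2 + (f 3::real)" unfolding UNIV4 by simp

lemma pd_const: "pd i (\<lambda>q. c) p = 0"
  unfolding pd_def by simp

lemma pd_u: "pd i (\<lambda>q. q $ 0 * c) p = (if i = 0 then c else 0)"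
proof -
  have "((\<lambda>t. (p + t *\<^sub>R axis i 1) $ 0 * c) has_real_derivative (if i = 0 then c else 0)) (at 0)"
    unfolding axis_def by (auto intro!: derivative_eq_intros)
  then show ?thesis unfolding pd_def by (rule DERIV_imp_deriv)
qed

definition Hf :: "(real \<Rightarrow> real \<Rightarrow> real \<Rightarrow> real) \<Rightarrow> pt \<Rightarrow> real" where
  "Hf H p = H (p $ 0) (p $ 2) (p $ 3)"

lemma pd_Hf1: "pd 1 (Hf H) p = 0"
proof -
  have "(\<lambda>t. Hf H (p + t *\<^sub>R axis 1 1)) = (\<lambda>t. Hf H p)"
    by (simp add: Hf_def axis_def)
  then show ?thesis unfolding pd_def by simp
qed

lemma pd_g: "pd i (\<lambda>q. pp_metric H q $ l $ j) p = (if l = 0 \<and> j = 0 then pd i (Hf H) p else 0)"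
proof (cases "l = 0 \<and> j = 0")
  case True
  then show ?thesis by (simp add: pp_metric_def Hf_def[abs_def])
next
  case False
  then have "(\<lambda>q. pp_metric H q $ l $ j) = (\<lambda>q. if (l = 0 \<and> j = 1) \<or> (l = 1 \<and> j = 0) then 1
     else if l = j \<and> (l = 2 \<or> l = 3) then 1 else 0)"
    by (auto simp: pp_metric_def)
  then show ?thesis using False by (auto simp add: pd_const)
qed

definition Minv :: "(real \<Rightarrow> real \<Rightarrow> real \<Rightarrow> real) \<Rightarrow> pt \<Rightarrow> real^4^4" where
  "Minv H p = (\<chi> i j. if (i = 0 \<and> j = 1) \<or> (i = 1 \<and> j = 0) then 1
     else if i = 1 \<and> j = 1 then - Hf H p else if i = j \<and> (i = 2 \<or> i = 3) then 1 else 0)"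

lemma minv_unique:
  fixes A B :: "real^4^4"
  assumes "A ** B = mat 1" "B ** A = mat 1"
  shows "matrix_inv A = B"
proof -
  have "\<exists>A'. A ** A' = mat 1 \<and> A' ** A = mat 1" using assms by blast
  then have s: "A ** matrix_inv A = mat 1 \<and> matrix_inv A ** A = mat 1"
    unfolding matrix_inv_def by (rule someI_ex)
  have "matrix_inv A = matrix_inv A ** (A ** B)" using assms by simp
  also have "\<dots> = (matrix_inv A ** A) ** B" by (simp add: matrix_mul_assoc)
  also have "\<dots> = B" using s by simp
  finally show ?thesis .
qed

lemma minv_pp: "matrix_inv (pp_metric H p) = Minv H p"
  apply (rule minv_unique)
  unfolding matrix_matrix_mult_def mat_def vec_eq_iff
   apply (simp_all add: sum4 forall4 pp_metric_def Minv_def Hf_def)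
  done
definition chr :: "(4 \<Rightarrow> real) \<Rightarrow> 4 \<Rightarrow> 4 \<Rightarrow> 4 \<Rightarrow> real" where
  "chr h k i j = (if k = 1 then ((if j = 0 then h i else 0) + (if i = 0 then h j else 0)
      - (if i = 0 \<and> j = 0 then h 0 else 0)) / 2
     else if (k = 2 \<or> k = 3) \<and> i = 0 \<and> j = 0 then - h k / 2 else 0)"

lemma christoffel_pp_all: "\<forall>k i j. christoffel (pp_metric H) p k i j = chr (\<lambda>i. pd i (Hf H) p) k i j"
  unfolding christoffel_def minv_pp pd_g sum4 
  by (simp add: forall4 Minv_def chr_def pd_Hf1)

lemma christoffel_pp: "christoffel (pp_metric H) p k i j = chr (\<lambda>i. pd i (Hf H) p) k i j"
  using christoffel_pp_all by blast
definition dl :: "4 \<Rightarrow> 4 \<Rightarrow> real" where "dl x y = (if x = y then 1 else 0)"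

lemma cwedge1: "cwedge [a] [i] = dl i a"
proof -
  have e: "{..<Suc 0} = {0::nat}" by auto
  show ?thesis unfolding cwedge_def by (simp add: e permutes_sing sign_id dl_def)
qed

lemma cwedge2: "cwedge [a, b] [i, j] = dl i a * dl j b - dl i b * dl j a"
proof -
  have e: "{..<length [a,b]} = insert (0::nat) {1}" by auto
  have f: "finite {1::nat}" "0 \<notin> {1::nat}" by auto
  show ?thesis unfolding cwedge_def
    apply (simp only: e if_True)
    unfolding sum_over_permutations_insert[OF f] permutes_sing
    by (simp add: sign_swap_id sign_id dl_def lessThan_Suc)
qed

lemma cwedge3: "cwedge [a, b, c] [i, j, k] =
   dl i a * dl j b * dl k c + dl i b * dl j c * dl k a + dl i c * dl j a * dl k b
 - dl i a * dl j c * dl k b - dl i b * dl j a * dl k c - dl i c * dl j b * dl k a"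
proof -
  have e: "{..<length [a,b,c]} = insert (0::nat) (insert 1 {2})" by auto
  have f: "finite (insert 1 {2::nat})" "0 \<notin> insert 1 {2::nat}" by auto
  have f2: "finite {2::nat}" "1 \<notin> {2::nat}" by auto
  show ?thesis unfolding cwedge_def
    apply (simp only: e if_True)
    unfolding sum_over_permutations_insert[OF f] sum_over_permutations_insert[OF f2] permutes_sing
    by (simp add: sign_swap_id permutation_swap_id sign_compose sign_id dl_def lessThan_Suc numeral_eq_Suc)
qed
lemma foldr_const: "foldr pd is (\<lambda>p. c) = (\<lambda>p. if is = [] then c else 0)"
  by (induction "is") (simp_all add: pd_const)

lemma foldr_u: "is \<noteq> [] \<Longrightarrow> \<exists>k. foldr pd is (\<lambda>p. p $ 0 * c) = (\<lambda>p. k)"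
proof (induction "is")
  case Nil then show ?case by simp
next
  case (Cons i js)
  show ?case
  proof (cases "js = []")
    case True then show ?thesis by (auto simp: pd_u fun_eq_iff)
  next
    case False
    then obtain k where k: "foldr pd js (\<lambda>p. p $ 0 * c) = (\<lambda>p. k)" using Cons by blast
    show ?thesis by (rule exI[of _ 0]) (simp add: k pd_const)
  qed
qed

lemma smooth_const: "smooth4 (\<lambda>p. c)"
  unfolding smooth4_def foldr_const by auto

lemma smooth_u: "smooth4 (\<lambda>p. p $ 0 * c)"
  unfolding smooth4_def
proof (intro allI)
  fix "is" p
  show "foldr pd is (\<lambda>p. p $ 0 * c) differentiable at p"
  proof (cases "is = []")
    case True
    have "bounded_linear (\<lambda>p::pt. p $ 0 * c)"
      by (rule bounded_linear_compose[OF bounded_linear_mult_left bounded_linear_vec_nth])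
    then have "(\<lambda>p::pt. p $ 0 * c) differentiable at p" by (rule bounded_linear_imp_differentiable)
    then show ?thesis unfolding True foldr.simps id_apply .
  next
    case False
    then obtain k where "foldr pd is (\<lambda>p. p $ 0 * c) = (\<lambda>p. k)" using foldr_u by blast
    then show ?thesis by simp
  qed
qed

lemma len1: "length xs = 1 \<longleftrightarrow> (\<exists>a. xs = [a])" by (auto simp: length_Suc_conv)
lemma len2: "length xs = 2 \<longleftrightarrow> (\<exists>a b. xs = [a,b])" by (auto simp: length_Suc_conv numeral_eq_Suc)
lemma len3: "length xs = 3 \<longleftrightarrow> (\<exists>a b c. xs = [a,b,c])" by (auto simp: length_Suc_conv numeral_eq_Suc)
lemma len4: "length xs = 4 \<longleftrightarrow> (\<exists>a b c d. xs = [a,b,c,d])" by (auto simp: length_Suc_conv numeral_eq_Suc)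
lemma len5: "length xs = 5 \<longleftrightarrow> (\<exists>a b c d e. xs = [a,b,c,d,e])" by (auto simp: length_Suc_conv numeral_eq_Suc)

lemma cov_cons: "cov g T p (\<mu> # \<nu>s) = pd \<mu> (\<lambda>q. T q \<nu>s) p
          - (\<Sum>a<length \<nu>s. \<Sum>l\<in>UNIV. christoffel g p l \<mu> (\<nu>s ! a) * T p (\<nu>s[a := l]))"
  unfolding cov_def by simp

lemma sym2_cons: "sym2 T p (a # b # rest) = (T p (a # b # rest) + T p (b # a # rest)) / 2"
  unfolding sym2_def by simp

lemmas ev = cov_cons sym2_cons christoffel_pp sum4 chr_def pd_u pd_const cwedge1 cwedge2 cwedge3 dl_def

lemma cov1: "cov (pp_metric H) (\<lambda>p idx. p $ 0 * cwedge [0] idx) p [\<mu>, \<nu>] = dl \<mu> 0 * dl \<nu> 0"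
  by (simp add: ev)

lemma sumn2: "(\<Sum>x<(2::nat). f x) = f 0 + (f 1::real)" by (simp add: numeral_eq_Suc)
lemma sumn3: "(\<Sum>x<(3::nat). f x) = f 0 + f 1 + (f 2::real)" by (simp add: numeral_eq_Suc)
lemma sumn4: "(\<Sum>x<(4::nat). f x) = f 0 + f 1 + f 2 + (f 3::real)" by (simp add: numeral_eq_Suc)

lemma part1: "affine_tensor (pp_metric H) 1 (\<lambda>p idx. p $ 0 * cwedge [0] idx)"
  unfolding affine_tensor_def is_form_def
proof (intro conjI allI impI)
  fix idx :: "4 list" assume "length idx = 1" 
  show "smooth4 (\<lambda>p. p $ 0 * cwedge [0] idx)" by (rule smooth_u)
next
  fix p :: pt and idx :: "4 list" and i assume "length idx = 1 \<and> Suc i < 1"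
  then show "p $ 0 * cwedge [0] (idx[i := idx ! Suc i, Suc i := idx ! i]) = - (p $ 0 * cwedge [0] idx)" by simp
next
  fix p :: pt and idx :: "4 list" assume "length idx = 1 + 2"
  then have "length idx = 3" by simp
  then obtain a b c where idx: "idx = [a,b,c]" by (metis len3)
  have s: "sym2 (cov (pp_metric H) (\<lambda>p idx. p $ 0 * cwedge [0] idx)) q [x, y] = dl x 0 * dl y 0" for q x y
    by (simp add: sym2_cons cov1)
  show "cov (pp_metric H) (sym2 (cov (pp_metric H) (\<lambda>p idx. p $ 0 * cwedge [0] idx))) p idx = 0"
    unfolding idx cov_cons
    apply (simp only: list.size sumn2 sumn3 sumn4 sum4)
    apply (simp add: s pd_const christoffel_pp chr_def dl_def)
    done
qed

lemma part1c: "closed_form 1 (\<lambda>p idx. p $ 0 * cwedge [0] idx)"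
  unfolding closed_form_def
proof (intro allI impI)
  fix p :: pt and idx :: "4 list" assume "length idx = Suc 1"
  then have "length idx = 2" by simp
  then obtain a b where idx: "idx = [a,b]" by (metis len2)
  show "ext_d (\<lambda>p idx. p $ 0 * cwedge [0] idx) p idx = 0"
    unfolding idx ext_d_def by (simp add: ev numeral_eq_Suc)
qed

lemmas evs = cov_cons list.size sumn2 sumn3 sumn4 sum4

lemma covKY: assumes "c = 2 \<or> c = 3"
  shows "cov (pp_metric H) (\<lambda>p idx. cwedge [0, c] idx) p [\<mu>, \<nu>, \<rho>] = 0"
proof -
  have "\<forall>\<mu> \<nu> \<rho>. cov (pp_metric H) (\<lambda>p idx. cwedge [0, c] idx) p [\<mu>, \<nu>, \<rho>] = 0"
    using assms
    apply (simp only: evs)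
    apply (elim disjE; simp add: forall4 pd_const christoffel_pp chr_def cwedge2 dl_def)
    done
  then show ?thesis by blast
qed

lemma antisym2: "cwedge [0, c] [b, a] = - cwedge [0, c] [a, b]"
  by (simp add: cwedge2)

lemma is_form2c: "is_form 2 (\<lambda>p idx. cwedge [0, c] idx)"
  unfolding is_form_def
proof (intro conjI allI impI)
  fix idx :: "4 list" assume "length idx = 2"
  show "smooth4 (\<lambda>p. cwedge [0, c] idx)" by (rule smooth_const)
next
  fix p :: pt and idx :: "4 list" and i assume a: "length idx = 2 \<and> Suc i < 2"
  then obtain x y where idx: "idx = [x,y]" by (metis len2)
  from a have "i = 0" by simp
  then show "cwedge [0, c] (idx[i := idx ! Suc i, Suc i := idx ! i]) = - (cwedge [0, c] idx)"
    using antisym2[of c y x] by (simp add: idx)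
qed

lemma is_form2u: "is_form 2 (\<lambda>p idx. p $ 0 * cwedge [0, c] idx)"
  unfolding is_form_def
proof (intro conjI allI impI)
  fix idx :: "4 list" assume "length idx = 2"
  show "smooth4 (\<lambda>p. p $ 0 * cwedge [0, c] idx)" by (rule smooth_u)
next
  fix p :: pt and idx :: "4 list" and i assume a: "length idx = 2 \<and> Suc i < 2"
  then obtain x y where idx: "idx = [x,y]" by (metis len2)
  from a have "i = 0" by simp
  then show "p $ 0 * cwedge [0, c] (idx[i := idx ! Suc i, Suc i := idx ! i]) = - (p $ 0 * cwedge [0, c] idx)"
    using antisym2[of c y x] by (simp add: idx)
qed

lemma partKY: assumes "c = 2 \<or> c = 3"
  shows "killing_yano (pp_metric H) 2 (\<lambda>p idx. cwedge [0, c] idx)"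
  unfolding killing_yano_def
proof (intro conjI allI impI is_form2c)
  fix p :: pt and idx :: "4 list" assume "length idx = 2 + 1"
  then have "length idx = 3" by simp
  then obtain a b d where idx: "idx = [a,b,d]" by (metis len3)
  show "sym2 (cov (pp_metric H) (\<lambda>p idx. cwedge [0, c] idx)) p idx = 0"
    unfolding idx sym2_cons covKY[OF assms] by simp
qed

lemma covP: assumes "c = 2 \<or> c = 3"
  shows "cov (pp_metric H) (\<lambda>p idx. p $ 0 * cwedge [0, c] idx) p [\<mu>, \<nu>, \<rho>] = dl \<mu> 0 * cwedge [0, c] [\<nu>, \<rho>]"
proof -
  have "\<forall>\<mu> \<nu> \<rho>. cov (pp_metric H) (\<lambda>p idx. p $ 0 * cwedge [0, c] idx) p [\<mu>, \<nu>, \<rho>] = dl \<mu> 0 * cwedge [0, c] [\<nu>, \<rho>]"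
    using assms
    apply (elim disjE; hypsubst; simp only: cov_cons pd_u; simp only: forall4; simp add: evs christoffel_pp chr_def cwedge2 dl_def)
    done
  then show ?thesis by blast
qed

lemma exh4: "\<lbrakk>x = 0 \<Longrightarrow> P; x = 1 \<Longrightarrow> P; x = 2 \<Longrightarrow> P; x = (3::4) \<Longrightarrow> P\<rbrakk> \<Longrightarrow> P"
proof -
  have f: "(4::4) = 0" by simp
  assume a: "x = 0 \<Longrightarrow> P" "x = 1 \<Longrightarrow> P" "x = 2 \<Longrightarrow> P" "x = (3::4) \<Longrightarrow> P"
  show P using exhaust_4[of x] a f by auto
qed

lemma sP: assumes "c = 2 \<or> c = 3"
  shows "sym2 (cov (pp_metric H) (\<lambda>p idx. p $ 0 * cwedge [0, c] idx)) q [x, y, z] = (dl x 0 * cwedge [0, c] [y, z] + dl y 0 * cwedge [0, c] [x, z]) / 2"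
    by (simp add: sym2_cons covP[OF assms])

lemma affP: assumes "c = 2 \<or> c = 3"
  shows "cov (pp_metric H) (sym2 (cov (pp_metric H) (\<lambda>p idx. p $ 0 * cwedge [0, c] idx))) p [l0, \<mu>, \<nu>, \<rho>] = 0"
proof -
  let ?T = "\<lambda>p idx. p $ 0 * cwedge [0, c] idx"
  have s: "sym2 (cov (pp_metric H) ?T) q [x, y, z] = (dl x 0 * cwedge [0, c] [y, z] + dl y 0 * cwedge [0, c] [x, z]) / 2" for q x y z
    by (simp add: sym2_cons covP[OF assms])
  show ?thesis
    apply (simp only: cov_cons s pd_const)
    using assms apply (elim disjE; hypsubst)
    apply (cases l0 rule: exh4; cases \<mu> rule: exh4; cases \<nu> rule: exh4; cases \<rho> rule: exh4)
    apply (simp_all add: sP evs christoffel_pp chr_def cwedge2 dl_def pd_Hf1)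
    done
qed

lemma partP: assumes "c = 2 \<or> c = 3"
  shows "proper_affine (pp_metric H) 2 (\<lambda>p idx. p $ 0 * cwedge [0, c] idx)"
proof -
  let ?T = "\<lambda>p idx. p $ 0 * cwedge [0, c] idx"
  have s: "sym2 (cov (pp_metric H) ?T) q [x, y, z] = (dl x 0 * cwedge [0, c] [y, z] + dl y 0 * cwedge [0, c] [x, z]) / 2" for q x y z
    by (simp add: sym2_cons covP[OF assms])
  show ?thesis
    unfolding proper_affine_def affine_tensor_def
  proof (intro conjI allI impI is_form2u)
    fix p :: pt and idx :: "4 list" assume "length idx = 2 + 2"
    then have "length idx = 4" by simp
    then obtain a b d e where idx: "idx = [a,b,d,e]" by (metis len4)
    show "cov (pp_metric H) (sym2 (cov (pp_metric H) ?T)) p idx = 0"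
      unfolding idx by (rule affP[OF assms])
  next
    show "\<exists>p idx. length idx = 2 + 1 \<and> sym2 (cov (pp_metric H) ?T) p idx \<noteq> 0"
      apply (rule exI[of _ 0], rule exI[of _ "[0, 0, c]"])
      using assms by (auto simp: s cwedge2 dl_def)
  qed
qed

lemma covW: "cov (pp_metric H) (\<lambda>p idx. p $ 0 * cwedge [0, 2, 3] idx) p [\<mu>, \<nu>, \<rho>, \<sigma>] = dl \<mu> 0 * cwedge [0, 2, 3] [\<nu>, \<rho>, \<sigma>]"
  apply (simp only: cov_cons pd_u)
  apply (cases \<mu> rule: exh4; cases \<nu> rule: exh4; cases \<rho> rule: exh4; cases \<sigma> rule: exh4)
  apply (simp_all add: evs christoffel_pp chr_def cwedge3 dl_def pd_Hf1)
  done

lemma sW: "sym2 (cov (pp_metric H) (\<lambda>p idx. p $ 0 * cwedge [0, 2, 3] idx)) q [x, y, z, w] = (dl x 0 * cwedge [0, 2, 3] [y, z, w] + dl y 0 * cwedge [0, 2, 3] [x, z, w]) / 2"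
  by (simp add: sym2_cons covW)

lemma affW: "cov (pp_metric H) (sym2 (cov (pp_metric H) (\<lambda>p idx. p $ 0 * cwedge [0, 2, 3] idx))) p [l0, \<mu>, \<nu>, \<rho>, \<sigma>] = 0"
  apply (simp only: cov_cons sW pd_const)
  apply (cases l0 rule: exh4; cases \<mu> rule: exh4; cases \<nu> rule: exh4; cases \<rho> rule: exh4; cases \<sigma> rule: exh4)
  apply (simp_all add: sW evs christoffel_pp chr_def cwedge3 dl_def pd_Hf1)
  done

lemma is_form3u: "is_form 3 (\<lambda>p idx. p $ 0 * cwedge [0, 2, 3] idx)"
  unfolding is_form_def
proof (intro conjI allI impI)
  fix idx :: "4 list" assume "length idx = 3"
  show "smooth4 (\<lambda>p. p $ 0 * cwedge [0, 2, 3] idx)" by (rule smooth_u)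
next
  fix p :: pt and idx :: "4 list" and i assume a: "length idx = 3 \<and> Suc i < 3"
  then obtain x y z where idx: "idx = [x,y,z]" by (metis len3)
  from a have "i = 0 \<or> i = 1" by auto
  then show "p $ 0 * cwedge [0, 2, 3] (idx[i := idx ! Suc i, Suc i := idx ! i]) = - (p $ 0 * cwedge [0, 2, 3] idx)"
    unfolding idx by (elim disjE; simp add: cwedge3 algebra_simps)
qed

lemma partW: "affine_tensor (pp_metric H) 3 (\<lambda>p idx. p $ 0 * cwedge [0, 2, 3] idx)"
  unfolding affine_tensor_def
proof (intro conjI allI impI is_form3u)
  fix p :: pt and idx :: "4 list" assume "length idx = 3 + 2"
  then have "length idx = 5" by simp
  then obtain a b d e f where idx: "idx = [a,b,d,e,f]" by (metis len5)
  show "cov (pp_metric H) (sym2 (cov (pp_metric H) (\<lambda>p idx. p $ 0 * cwedge [0, 2, 3] idx))) p idx = 0"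
    unfolding idx by (rule affW)
qed

theorem mainTheorem10:
  fixes H :: "real \<Rightarrow> real \<Rightarrow> real \<Rightarrow> real"
  assumes "smooth4 (\<lambda>p. H (p $ 0) (p $ 2) (p $ 3))"
  defines "g \<equiv> pp_metric H"
  shows "affine_tensor g 1 (\<lambda>p idx. p $ 0 * cwedge [0] idx)
       \<and> closed_form 1 (\<lambda>p idx. p $ 0 * cwedge [0] idx)
       \<and> killing_yano g 2 (\<lambda>p idx. cwedge [0, 2] idx)
       \<and> killing_yano g 2 (\<lambda>p idx. cwedge [0, 3] idx)
       \<and> proper_affine g 2 (\<lambda>p idx. p $ 0 * cwedge [0, 2] idx)
       \<and> proper_affine g 2 (\<lambda>p idx. p $ 0 * cwedge [0, 3] idx)
       \<and> affine_tensor g 3 (\<lambda>p idx. p $ 0 * cwedge [0, 2, 3] idx)"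
  unfolding g_def using part1 part1c partKY partP partW by simp

end
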